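(* Consider any sub-auction (upper level or lower level) of the hierarchical auction, run either with Rule A (exact winner determination with price $\max\{q^{\mathrm{base}},q^{\mathrm{vcg}}\}$) or with Rule B (greedy winner determination with price $\max\{q^{\mathrm{base}},q^{\mathrm{greedy}}\}$), as defined in the context. Then the mechanism is individually rational for truthful bidders: every bidder $k$ that bids truthfully ($b_k(S)=v_k(S)$ for all $S\in\mathcal{B}_k$) obtains utility $u_k\ge 0$; that is, if $k$ wins bundle $S_k$ and is charged $q_k$, then $v_k(S_k)-q_k\ge 0$ (a losing bidder pays nothing and has utility $0$).
   Context: Sub-auction model. There are $R$ resource types and an integer capacity vector $Q\in\mathbb{Z}_{\ge0}^R$ held by a single seller (who is also the auctioneer). In the hierarchical auction, the upper-level sub-auction has the infrastructure provider as seller with $R=3$ (subchannels, discretized power units, antennas) and capacities equal to the leftover (non-reserved) resources, the bidders being the virtual network operators; each lower-level sub-auction has one virtual network operator as seller with $R=2$ and capacities $(\hat C_m J,\hat P_m)$ (available subchannels times maximal number $J$ of users per subchannel, and available power units), the bidders being its users. Both levels are instances of the following model. Each bidder $i$ in a finite set $N$ submits an XOR bid: a finite set $\mathcal{B}_i\subset\mathbb{Z}_{\ge0}^R\setminus\{0\}$ of bundles and a bid value $b_i(S)\ge 0$ for each $S\in\mathcal{B}_i$ (a single-minded bidder has $|\mathcal{B}_i|=1$). A feasible allocation is $x=(x_i(S))$ with $x_i(S)\in\{0,1\}$, $\sum_{S\in\mathcal{B}_i}x_i(S)\le1$ for each $i$, and $\sum_i\sum_{S}x_i(S)\,S\le Q$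 componentwise; bidder $i$ wins $S$ if $x_i(S)=1$. Bidder $i$ has a private valuation $v_i:\mathcal{B}_i\to\mathbb{R}_{\ge0}$; its utility is $u_i=v_i(S_i)-q_i$ if it wins $S_i$ and is charged $q_i$, and $u_i=0$ if it wins nothing (losers are not charged). Base price: there is a vector $\beta\in\mathbb{R}_{\ge0}^R$ of per-unit base access prices, known to all, and $q^{\mathrm{base}}(S)=\beta\cdot S$. Standing assumption: a bidder places a bid on a bundle $S$ only if $v_i(S)\ge q^{\mathrm{base}}(S)$. Rule A: the allocation $x^*$ maximizes $\sum_i\sum_S b_i(S)x_i(S)$ over feasible allocations; with $W$ its optimal value and $W_{-k}$ the optimal value of the same problem with bidder $k$ removed, a winner $k$ of bundle $S_k$ is charged $q_k=\max\{q^{\mathrm{base}}(S_k),q_k^{\mathrm{vcg}}\}$ where $q_k^{\mathrm{vcg}}=W_{-k}-(W-b_k(S_k))$. Rule B: fix weights $\omega\in\mathbb{R}_{>0}^R$ and let $|S|=\omega\cdot S$. List all pairs $(i,S)$ with $S\in\mathcal{B}_i$ in nonincreasing order of $b_i(S)/\sqrt{|S|}$ (ties broken by a fixed rule); scanning the list, accept pair $(i,S)$ (bidder $i$ wins $S$) iff $i$ has not yet won a bundle and $S$ fits in the remaining capacity, and then subtract $S$ from the remaining capacity. For a winner $k$ of $S_k$, let $\mathbb{B}_k$ be the set of pairs $(j,T)$, $j\neq k$, such that $j$ wins nothing in this run but the same greedy procedure run on the bids of all bidders except $k$ accepts $(j,T)$ (bidder $k$ "uniquely blocks" $j$). Then $q_k^{\mathrm{greedy}}=\max_{(j,T)\in\mathbb{B}_k}\frac{b_j(T)}{\sqrt{|T|}}\sqrt{|S_k|}$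 (taken as $0$ if $\mathbb{B}_k=\emptyset$) and $k$ is charged $q_k=\max\{q^{\mathrm{base}}(S_k),q_k^{\mathrm{greedy}}\}$. *)

theory Defs
  imports Complex_Main
begin

(* Resource types are indexed by a finite type 'r (R = CARD('r)); a bundle / capacity
   vector is a function 'r => nat.  Bidders have type 'b; an allocation maps each
   bidder to the bundle it wins (None = wins nothing). *)

type_synonym 'r rbundle = "'r \<Rightarrow> nat"

definition base_price :: "('r::finite \<Rightarrow> real) \<Rightarrow> 'r rbundle \<Rightarrow> real" where
  "base_price \<beta> S = (\<Sum>r\<in>UNIV. \<beta> r * real (S r))"

definition feasible ::
  "'b set \<Rightarrow> ('b \<Rightarrow> 'r rbundle set) \<Rightarrow> 'r rbundle \<Rightarrow> ('b \<Rightarrow> 'r rbundle option) \<Rightarrow> bool" where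
  "feasible N B Q x \<longleftrightarrow>
     (\<forall>i S. x i = Some S \<longrightarrow> i \<in> N \<and> S \<in> B i) \<and>
     (\<forall>r. (\<Sum>i\<in>{i\<in>N. x i \<noteq> None}. the (x i) r) \<le> Q r)"

definition welfare :: "'b set \<Rightarrow> ('b \<Rightarrow> 'r rbundle \<Rightarrow> real) \<Rightarrow> ('b \<Rightarrow> 'r rbundle option) \<Rightarrow> real" where
  "welfare N b x = (\<Sum>i\<in>N. case x i of None \<Rightarrow> 0 | Some S \<Rightarrow> b i S)"

definition opt_welfare ::
  "'b set \<Rightarrow> ('b \<Rightarrow> 'r rbundle set) \<Rightarrow> ('b \<Rightarrow> 'r rbundle \<Rightarrow> real) \<Rightarrow> 'r rbundle \<Rightarrow> real" where
  "opt_welfare N B b Q = Max (welfare N b ` {x. feasible N B Q x})"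

definition vcg_payment ::
  "'b set \<Rightarrow> ('b \<Rightarrow> 'r rbundle set) \<Rightarrow> ('b \<Rightarrow> 'r rbundle \<Rightarrow> real) \<Rightarrow> 'r rbundle
     \<Rightarrow> ('b \<Rightarrow> 'r rbundle option) \<Rightarrow> 'b \<Rightarrow> real" where
  "vcg_payment N B b Q x k =
     opt_welfare (N - {k}) B b Q - (opt_welfare N B b Q - b k (the (x k)))"

definition ruleA_price ::
  "('r::finite \<Rightarrow> real) \<Rightarrow> 'b set \<Rightarrow> ('b \<Rightarrow> 'r rbundle set) \<Rightarrow> ('b \<Rightarrow> 'r rbundle \<Rightarrow> real)
     \<Rightarrow> 'r rbundle \<Rightarrow> ('b \<Rightarrow> 'r rbundle option) \<Rightarrow> 'b \<Rightarrow> real" where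
  "ruleA_price \<beta> N B b Q x k = max (base_price \<beta> (the (x k))) (vcg_payment N B b Q x k)"

definition wsize :: "('r::finite \<Rightarrow> real) \<Rightarrow> 'r rbundle \<Rightarrow> real" where
  "wsize \<omega> S = (\<Sum>r\<in>UNIV. \<omega> r * real (S r))"

definition ratio :: "('b \<Rightarrow> 'r rbundle \<Rightarrow> real) \<Rightarrow> ('r::finite \<Rightarrow> real) \<Rightarrow> 'b \<times> 'r rbundle \<Rightarrow> real" where
  "ratio b \<omega> p = b (fst p) (snd p) / sqrt (wsize \<omega> (snd p))"

(* the list of all bid pairs, in nonincreasing order of b_i(S)/sqrt|S|; its order among
   ties is the fixed tie-breaking rule *)
definition greedy_list_ok ::
  "'b set \<Rightarrow> ('b \<Rightarrow> 'r rbundle set) \<Rightarrow> ('b \<Rightarrow> 'r rbundle \<Rightarrow> real) \<Rightarrow> ('r::finite \<Rightarrow> real)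
     \<Rightarrow> ('b \<times> 'r rbundle) list \<Rightarrow> bool" where
  "greedy_list_ok N B b \<omega> L \<longleftrightarrow>
     distinct L \<and> set L = {(i, S). i \<in> N \<and> S \<in> B i} \<and>
     sorted_wrt (\<lambda>p q. ratio b \<omega> q \<le> ratio b \<omega> p) L"

fun greedy_run ::
  "('b \<times> 'r rbundle) list \<Rightarrow> 'r rbundle \<Rightarrow> ('b \<Rightarrow> 'r rbundle option) \<Rightarrow> ('b \<Rightarrow> 'r rbundle option)" where
  "greedy_run [] cap w = w"
| "greedy_run ((i, S) # L) cap w =
     (if w i = None \<and> (\<forall>r. S r \<le> cap r)
      then greedy_run L (\<lambda>r. cap r - S r) (w(i := Some S))
      else greedy_run L cap w)"

definition greedy_alloc :: "('b \<times> 'r rbundle) list \<Rightarrow> 'r rbundle \<Rightarrow> ('b \<Rightarrow> 'r rbundle option)" where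
  "greedy_alloc L Q = greedy_run L Q (\<lambda>_. None)"

definition blocked :: "('b \<times> 'r rbundle) list \<Rightarrow> 'r rbundle \<Rightarrow> 'b \<Rightarrow> ('b \<times> 'r rbundle) set" where
  "blocked L Q k = {(j, T). j \<noteq> k \<and> greedy_alloc L Q j = None \<and>
                      greedy_alloc (filter (\<lambda>p. fst p \<noteq> k) L) Q j = Some T}"

definition greedy_payment ::
  "('b \<Rightarrow> 'r rbundle \<Rightarrow> real) \<Rightarrow> ('r::finite \<Rightarrow> real) \<Rightarrow> ('b \<times> 'r rbundle) list \<Rightarrow> 'r rbundle
     \<Rightarrow> 'b \<Rightarrow> real" where
  "greedy_payment b \<omega> L Q k =
     (let Sk = the (greedy_alloc L Q k) in
      if blocked L Q k = {} then 0
      else Max ((\<lambda>(j, T). b j T / sqrt (wsize \<omega> T) * sqrt (wsize \<omega> Sk)) ` blocked L Q k))"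

definition ruleB_price ::
  "('r::finite \<Rightarrow> real) \<Rightarrow> ('b \<Rightarrow> 'r rbundle \<Rightarrow> real) \<Rightarrow> ('r \<Rightarrow> real) \<Rightarrow> ('b \<times> 'r rbundle) list
     \<Rightarrow> 'r rbundle \<Rightarrow> 'b \<Rightarrow> real" where
  "ruleB_price \<beta> b \<omega> L Q k =
     max (base_price \<beta> (the (greedy_alloc L Q k))) (greedy_payment b \<omega> L Q k)"

end

theory Submission
  imports Defs
begin

lemma gr_mono: "w i = Some S \<Longrightarrow> greedy_run L cap w i = Some S"
proof (induction L cap w rule: greedy_run.induct)
  case (2 ia Sa L cap w)
  show ?case
  proof (cases "w ia = None \<and> (\<forall>r. Sa r \<le> cap r)")
    case True
    hence "i \<noteq> ia" using 2(3) by auto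
    thus ?thesis using True 2 by (simp add: fun_upd_def)
  next
    case False thus ?thesis using 2 by auto
  qed
qed simp

lemma gr_origin: "greedy_run L cap w i = Some S \<Longrightarrow> w i = Some S \<or> (i,S) \<in> set L"
  by (induction L cap w rule: greedy_run.induct) (auto split: if_splits)

lemma gr_none: "greedy_run L cap w i = None \<Longrightarrow> w i = None"
  using gr_mono by (cases "w i") fastforce+

lemma gr_block:
  assumes "greedy_run L cap w k = Some Sk" "w k = None" "\<forall>i. i\<noteq>k \<longrightarrow> w i = w' i" "j \<noteq> k"
    "greedy_run L cap w j = None" "greedy_run (filter (\<lambda>p. fst p \<noteq> k) L) cap w' j = Some T"
  shows "\<exists>L1 L2. L = L1 @ (k,Sk) # L2 \<and> (j,T) \<in> set L2"
  using assms
proof (induction L arbitrary: cap w w')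
  case Nil thus ?case by simp
next
  case (Cons p L)
  obtain i S where p: "p = (i,S)" by fastforce
  show ?case
  proof (cases "i = k")
    case ik: True
    show ?thesis
    proof (cases "\<forall>r. S r \<le> cap r")
      case True
      with Cons.prems p ik have acc: "greedy_run (p#L) cap w = greedy_run L (\<lambda>r. cap r - S r) (w(k:=Some S))" by simp
      have "Sk = S" using Cons.prems(1) acc gr_mono[of "w(k:=Some S)" k S L] by simp
      have "(w(k:=Some S)) j = None" using Cons.prems(5) acc gr_none by metis
      hence "w' j = None" using Cons.prems(3,4) by auto
      moreover have "filter (\<lambda>p. fst p \<noteq> k) (p#L) = filter (\<lambda>p. fst p \<noteq> k) L" using p ik by simp
      ultimately have "(j,T) \<in> set L" using Cons.prems(6) gr_origin by fastforce
      thus ?thesis using p ik \<open>Sk = S\<close> by (intro exI[of _ "[]"] exI[of _ L]) simp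
    next
      case False
      hence r: "greedy_run (p#L) cap w = greedy_run L cap w" using p ik by auto
      have f: "filter (\<lambda>p. fst p \<noteq> k) (p#L) = filter (\<lambda>p. fst p \<noteq> k) L" using p ik by simp
      obtain L1 L2 where "L = L1 @ (k,Sk) # L2 \<and> (j,T) \<in> set L2"
        using Cons.IH[of cap w w'] Cons.prems r f by auto
      thus ?thesis by (intro exI[of _ "p#L1"] exI[of _ L2]) simp
    qed
  next
    case ik: False
    have f: "filter (\<lambda>p. fst p \<noteq> k) (p#L) = (i,S) # filter (\<lambda>p. fst p \<noteq> k) L" using p ik by simp
    have wi: "w i = w' i" using Cons.prems(3) ik by auto
    show ?thesis
    proof (cases "w i = None \<and> (\<forall>r. S r \<le> cap r)")
      case True
      hence r: "greedy_run (p#L) cap w = greedy_run L (\<lambda>r. cap r - S r) (w(i:=Some S))" using p by simp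
      have r': "greedy_run (filter (\<lambda>p. fst p \<noteq> k) (p#L)) cap w' = greedy_run (filter (\<lambda>p. fst p \<noteq> k) L) (\<lambda>r. cap r - S r) (w'(i:=Some S))" using f True wi by simp
      have a1: "(w(i:=Some S)) k = None" using ik Cons.prems(2) by simp
      have a2: "\<forall>i'. i'\<noteq>k \<longrightarrow> (w(i:=Some S)) i' = (w'(i:=Some S)) i'" using Cons.prems(3) by simp
      obtain L1 L2 where "L = L1 @ (k,Sk) # L2 \<and> (j,T) \<in> set L2"
      proof -
        have b1: "greedy_run L (\<lambda>r. cap r - S r) (w(i:=Some S)) k = Some Sk" using Cons.prems(1) r by simp
        have b5: "greedy_run L (\<lambda>r. cap r - S r) (w(i:=Some S)) j = None" using Cons.prems(5) r by simp
        have b6: "greedy_run (filter (\<lambda>p. fst p \<noteq> k) L) (\<lambda>r. cap r - S r) (w'(i:=Some S)) j = Some T" using Cons.prems(6) r' by simp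
        show ?thesis using Cons.IH[of "\<lambda>r. cap r - S r" "w(i:=Some S)" "w'(i:=Some S)"] b1 a1 a2 Cons.prems(4) b5 b6 that
          by (simp add: fun_upd_def) blast
      qed
      thus ?thesis by (intro exI[of _ "p#L1"] exI[of _ L2]) simp
    next
      case False
      hence r: "greedy_run (p#L) cap w = greedy_run L cap w" using p by auto
      have r': "greedy_run (filter (\<lambda>p. fst p \<noteq> k) (p#L)) cap w' = greedy_run (filter (\<lambda>p. fst p \<noteq> k) L) cap w'" using f False wi by auto
      obtain L1 L2 where "L = L1 @ (k,Sk) # L2 \<and> (j,T) \<in> set L2"
        using Cons.IH[of cap w w'] Cons.prems r r' by auto
      thus ?thesis by (intro exI[of _ "p#L1"] exI[of _ L2]) simp
    qed
  qed
qed

lemma feas_finite: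
  assumes "finite M" "\<forall>i\<in>M. finite (B i)"
  shows "finite {x. feasible M B Q x}"
proof -
  let ?D = "insert None (Some ` (\<Union>i\<in>M. B i))"
  have "finite ?D" using assms by auto
  hence "finite {f. \<forall>x. (x \<in> M \<longrightarrow> f x \<in> ?D) \<and> (x \<notin> M \<longrightarrow> f x = None)}"
    by (rule finite_set_of_finite_funs[OF assms(1)])
  moreover have "{x. feasible M B Q x} \<subseteq> {f. \<forall>x. (x \<in> M \<longrightarrow> f x \<in> ?D) \<and> (x \<notin> M \<longrightarrow> f x = None)}"
  proof
    fix x assume "x \<in> {x. feasible M B Q x}"
    hence h: "\<forall>i S. x i = Some S \<longrightarrow> i \<in> M \<and> S \<in> B i" unfolding feasible_def by blast
    have "x i \<in> ?D" if "i \<in> M" for i using h that by (cases "x i") auto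
    moreover have "x i = None" if "i \<notin> M" for i using h that by (cases "x i") auto
    ultimately show "x \<in> {f. \<forall>x. (x \<in> M \<longrightarrow> f x \<in> ?D) \<and> (x \<notin> M \<longrightarrow> f x = None)}" by blast
  qed
  ultimately show ?thesis by (rule finite_subset[rotated])
qed


theorem theorem3p1:
  fixes N :: "'b set" and B :: "'b \<Rightarrow> ('r::finite \<Rightarrow> nat) set"
    and b v :: "'b \<Rightarrow> ('r \<Rightarrow> nat) \<Rightarrow> real"
    and \<beta> :: "'r \<Rightarrow> real" and Q :: "'r \<Rightarrow> nat" and k :: 'b
  assumes finN: "finite N"
    and finB: "\<forall>i\<in>N. finite (B i)"
    and nonzero: "\<forall>i\<in>N. \<forall>S\<in>B i. S \<noteq> (\<lambda>_. 0)"
    and bid_nonneg: "\<forall>i\<in>N. \<forall>S\<in>B i. b i S \<ge> 0"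
    and val_nonneg: "\<forall>i\<in>N. \<forall>S\<in>B i. v i S \<ge> 0"
    and beta_nonneg: "\<forall>r. \<beta> r \<ge> 0"
    and standing: "\<forall>i\<in>N. \<forall>S\<in>B i. v i S \<ge> base_price \<beta> S"
    and kN: "k \<in> N"
    and truthful: "\<forall>S\<in>B k. b k S = v k S"
  shows "(\<forall>x Sk. feasible N B Q x \<and> welfare N b x = opt_welfare N B b Q \<and> x k = Some Sk
             \<longrightarrow> v k Sk - ruleA_price \<beta> N B b Q x k \<ge> 0)
       \<and> (\<forall>\<omega> L Sk. (\<forall>r. \<omega> r > 0) \<and> greedy_list_ok N B b \<omega> L \<and> greedy_alloc L Q k = Some Sk
             \<longrightarrow> v k Sk - ruleB_price \<beta> b \<omega> L Q k \<ge> 0)"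
proof (intro conjI allI impI)
  fix x Sk
  assume a: "feasible N B Q x \<and> welfare N b x = opt_welfare N B b Q \<and> x k = Some Sk"
  have SkB: "Sk \<in> B k" using a unfolding feasible_def by blast
  have base: "base_price \<beta> Sk \<le> v k Sk" using standing kN SkB by blast
  let ?F = "{y. feasible N B Q y}"
  let ?F' = "{y. feasible (N - {k}) B Q y}"
  have finF: "finite (welfare N b ` ?F)" using feas_finite[OF finN finB] by simp
  have finF': "finite (welfare (N-{k}) b ` ?F')" using feas_finite[of "N-{k}" B Q] finN finB by simp
  have ne: "(\<lambda>_. None) \<in> ?F'" unfolding feasible_def by simp
  have le: "welfare (N-{k}) b y \<le> opt_welfare N B b Q" if y: "y \<in> ?F'" for y
  proof -
    have h: "\<forall>i S. y i = Some S \<longrightarrow> i \<in> N - {k} \<and> S \<in> B i" and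
      c: "\<forall>r. (\<Sum>i\<in>{i\<in>N-{k}. y i \<noteq> None}. the (y i) r) \<le> Q r"
      using y unfolding feasible_def by blast+
    have yk: "y k = None" using h by (cases "y k") auto
    have eq: "{i\<in>N-{k}. y i \<noteq> None} = {i\<in>N. y i \<noteq> None}" using yk by auto
    have fy: "feasible N B Q y" unfolding feasible_def using h c eq by auto
    have "welfare N b y = welfare (N-{k}) b y + (case y k of None \<Rightarrow> 0 | Some S \<Rightarrow> b k S)"
      unfolding welfare_def using sum.remove[OF finN kN] by (simp add: add.commute)
    hence "welfare (N-{k}) b y = welfare N b y" using yk by simp
    also have "\<dots> \<le> opt_welfare N B b Q" unfolding opt_welfare_def using finF fy by (intro Max_ge) auto
    finally show ?thesis .
  qed
  have "opt_welfare (N-{k}) B b Q \<le> opt_welfare N B b Q"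
    unfolding opt_welfare_def[of "N-{k}"] using finF' ne le by (subst Max_le_iff) auto
  hence "vcg_payment N B b Q x k \<le> v k Sk"
    unfolding vcg_payment_def using a truthful SkB by simp
  thus "v k Sk - ruleA_price \<beta> N B b Q x k \<ge> 0" using base a unfolding ruleA_price_def by simp
next
  fix \<omega> L Sk
  assume a: "(\<forall>r. \<omega> r > (0::real)) \<and> greedy_list_ok N B b \<omega> L \<and> greedy_alloc L Q k = Some Sk"
  have om: "\<forall>r. \<omega> r > 0" and ok: "greedy_list_ok N B b \<omega> L" and ga: "greedy_alloc L Q k = Some Sk"
    using a by auto
  have setL: "set L = {(i, S). i \<in> N \<and> S \<in> B i}" and sorted: "sorted_wrt (\<lambda>p q. ratio b \<omega> q \<le> ratio b \<omega> p) L"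
    using ok unfolding greedy_list_ok_def by auto
  have "(k,Sk) \<in> set L" using gr_origin[of L Q "\<lambda>_. None" k Sk] ga unfolding greedy_alloc_def by simp
  hence SkB: "Sk \<in> B k" using setL by auto
  have base: "base_price \<beta> Sk \<le> v k Sk" using standing kN SkB by blast
  have "Sk \<noteq> (\<lambda>_. 0)" using nonzero kN SkB by blast
  then obtain r0 where r0: "Sk r0 \<noteq> 0" by auto
  have wpos: "wsize \<omega> Sk > 0" unfolding wsize_def
  proof (rule sum_pos2[where i=r0])
    show "0 < \<omega> r0 * real (Sk r0)" using om r0 by simp
    show "\<And>i. i \<in> UNIV \<Longrightarrow> 0 \<le> \<omega> i * real (Sk i)" using om by (simp add: less_imp_le)
  qed auto
  have gp: "greedy_payment b \<omega> L Q k \<le> v k Sk"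
  proof (cases "blocked L Q k = {}")
    case True
    thus ?thesis unfolding greedy_payment_def using val_nonneg kN SkB by simp
  next
    case False
    have sub: "blocked L Q k \<subseteq> set L"
    proof
      fix p assume "p \<in> blocked L Q k"
      then obtain j T where p: "p = (j,T)" and "greedy_alloc (filter (\<lambda>p. fst p \<noteq> k) L) Q j = Some T"
        unfolding blocked_def by blast
      hence "(j,T) \<in> set (filter (\<lambda>p. fst p \<noteq> k) L)"
        using gr_origin[of "filter (\<lambda>p. fst p \<noteq> k) L" Q "\<lambda>_. None" j T] unfolding greedy_alloc_def by simp
      thus "p \<in> set L" using p by simp
    qed
    hence finb: "finite (blocked L Q k)" using finite_subset by blast
    have each: "b j T / sqrt (wsize \<omega> T) * sqrt (wsize \<omega> Sk) \<le> v k Sk" if jT: "(j,T) \<in> blocked L Q k" for j T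
    proof -
      have j: "j \<noteq> k" "greedy_run L Q (\<lambda>_. None) j = None"
        "greedy_run (filter (\<lambda>p. fst p \<noteq> k) L) Q (\<lambda>_. None) j = Some T"
        using jT unfolding blocked_def greedy_alloc_def by auto
      obtain L1 L2 where L: "L = L1 @ (k,Sk) # L2" and jT2: "(j,T) \<in> set L2"
        using gr_block[of L Q "\<lambda>_. None" k Sk "\<lambda>_. None" j T] ga j unfolding greedy_alloc_def by auto
      have "sorted_wrt (\<lambda>p q. ratio b \<omega> q \<le> ratio b \<omega> p) ((k,Sk) # L2)"
        using sorted L sorted_wrt_append by blast
      hence "ratio b \<omega> (j,T) \<le> ratio b \<omega> (k,Sk)" using jT2 by simp
      hence "b j T / sqrt (wsize \<omega> T) \<le> b k Sk / sqrt (wsize \<omega> Sk)" unfolding ratio_def by simp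
      hence "b j T / sqrt (wsize \<omega> T) * sqrt (wsize \<omega> Sk) \<le> b k Sk / sqrt (wsize \<omega> Sk) * sqrt (wsize \<omega> Sk)"
        by (rule mult_right_mono) (use wpos in simp)
      also have "\<dots> = b k Sk" using wpos by simp
      finally show ?thesis using truthful SkB by simp
    qed
    have "Max ((\<lambda>(j, T). b j T / sqrt (wsize \<omega> T) * sqrt (wsize \<omega> Sk)) ` blocked L Q k) \<le> v k Sk"
    proof (rule Max.boundedI)
      show "finite ((\<lambda>(j, T). b j T / sqrt (wsize \<omega> T) * sqrt (wsize \<omega> Sk)) ` blocked L Q k)" using finb by simp
      show "(\<lambda>(j, T). b j T / sqrt (wsize \<omega> T) * sqrt (wsize \<omega> Sk)) ` blocked L Q k \<noteq> {}" using False by simp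
      fix y assume "y \<in> (\<lambda>(j, T). b j T / sqrt (wsize \<omega> T) * sqrt (wsize \<omega> Sk)) ` blocked L Q k"
      then obtain j T where "(j,T) \<in> blocked L Q k" "y = b j T / sqrt (wsize \<omega> T) * sqrt (wsize \<omega> Sk)" by auto
      thus "y \<le> v k Sk" using each by blast
    qed
    thus ?thesis unfolding greedy_payment_def Let_def using False ga by simp
  qed
  show "v k Sk - ruleB_price \<beta> b \<omega> L Q k \<ge> 0"
    using base gp ga unfolding ruleB_price_def by simp
qed

end
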